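(* Let $R$ be a commutative domain with unit, let $f\in R$ be nonzero and non-invertible, and let $S=R[u,v]/(uv-f)$. Then the images of $u$ and $v$ are irreducible elements of $S$.
   Context: A nonzero element $r$ of a domain is irreducible if it is not invertible and whenever $r=r_1r_2$, one of $r_1,r_2$ is invertible. *)

theory Defs
  imports "HOL-Algebra.Algebra"
begin

definition irreducible_elem :: "('a, 'm) ring_scheme \<Rightarrow> 'a \<Rightarrow> bool" where
  "irreducible_elem S r \<longleftrightarrow> r \<in> carrier S \<and> r \<noteq> \<zero>\<^bsub>S\<^esub> \<and> r \<notin> Units S \<and>
     (\<forall>r1\<in>carrier S. \<forall>r2\<in>carrier S. r = r1 \<otimes>\<^bsub>S\<^esub> r2 \<longrightarrow> r1 \<in> Units S \<or> r2 \<in> Units S)"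

definition var_u :: "('a, 'm) ring_scheme \<Rightarrow> nat \<Rightarrow> nat \<Rightarrow> 'a" where
  "var_u R = monom (UP (UP R)) (monom (UP R) \<one>\<^bsub>R\<^esub> 1) 0"

definition var_v :: "('a, 'm) ring_scheme \<Rightarrow> nat \<Rightarrow> nat \<Rightarrow> 'a" where
  "var_v R = monom (UP (UP R)) \<one>\<^bsub>UP R\<^esub> 1"

definition const2 :: "('a, 'm) ring_scheme \<Rightarrow> 'a \<Rightarrow> nat \<Rightarrow> nat \<Rightarrow> 'a" where
  "const2 R a = monom (UP (UP R)) (monom (UP R) a 0) 0"

definition uv_ideal :: "('a, 'm) ring_scheme \<Rightarrow> 'a \<Rightarrow> (nat \<Rightarrow> nat \<Rightarrow> 'a) set" where
  "uv_ideal R f = PIdl\<^bsub>UP (UP R)\<^esub> (var_u R \<otimes>\<^bsub>UP (UP R)\<^esub> var_v R \<ominus>\<^bsub>UP (UP R)\<^esub> const2 R f)"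

definition S_ring :: "('a, 'm) ring_scheme \<Rightarrow> 'a \<Rightarrow> (nat \<Rightarrow> nat \<Rightarrow> 'a) set ring" where
  "S_ring R f = UP (UP R) Quot uv_ideal R f"

definition img :: "('a, 'm) ring_scheme \<Rightarrow> 'a \<Rightarrow> (nat \<Rightarrow> nat \<Rightarrow> 'a) \<Rightarrow> (nat \<Rightarrow> nat \<Rightarrow> 'a) set" where
  "img R f p = uv_ideal R f +>\<^bsub>UP (UP R)\<^esub> p"

end

theory Submission
  imports Defs
begin

lemma raw_coeff: "p \<in> carrier (UP S) \<Longrightarrow> coeff (UP S) p = p"
  by (auto simp: UP_def)

definition wcK :: "('a, 'm) ring_scheme \<Rightarrow> 'a \<Rightarrow> nat \<Rightarrow> (nat \<Rightarrow> nat \<Rightarrow> 'a) \<Rightarrow> int \<Rightarrow> 'a" where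
  "wcK R f K p n = (\<Oplus>\<^bsub>R\<^esub> j\<in>{..K}. if 0 \<le> n + int j then p j (nat (n + int j)) \<otimes>\<^bsub>R\<^esub> f [^]\<^bsub>R\<^esub> j else \<zero>\<^bsub>R\<^esub>)"

definition wc :: "('a, 'm) ring_scheme \<Rightarrow> 'a \<Rightarrow> (nat \<Rightarrow> nat \<Rightarrow> 'a) \<Rightarrow> int \<Rightarrow> 'a" where
  "wc R f p n = wcK R f (deg (UP R) p) p n"

lemma up_induct_le:
  assumes S: "ring S" and p: "p \<in> carrier (UP S)" and d: "deg S p \<le> K"
   and z: "Q \<zero>\<^bsub>UP S\<^esub>" and add: "\<And>a b. a \<in> carrier (UP S) \<Longrightarrow> b \<in> carrier (UP S) \<Longrightarrow> Q a \<Longrightarrow> Q b \<Longrightarrow> Q (a \<oplus>\<^bsub>UP S\<^esub> b)"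
   and mon: "\<And>i. i \<le> K \<Longrightarrow> Q (monom (UP S) (coeff (UP S) p i) i)"
  shows "Q p"
proof -
  interpret U: UP_ring S "UP S" using S by (simp add: UP_ring_def)
  let ?g = "\<lambda>i. monom (UP S) (coeff (UP S) p i) i"
  have g: "?g \<in> A \<rightarrow> carrier (UP S)" for A using p by simp
  have *: "A \<subseteq> {..K} \<Longrightarrow> Q (finsum (UP S) ?g A)" if "finite A" for A
    using that
  proof (induction A rule: finite_induct)
    case empty then show ?case using z by simp
  next
    case (insert x F)
    have "finsum (UP S) ?g (insert x F) = ?g x \<oplus>\<^bsub>UP S\<^esub> finsum (UP S) ?g F"
      by (rule U.P.finsum_insert) (use insert g in auto)
    moreover have "Q (?g x \<oplus>\<^bsub>UP S\<^esub> finsum (UP S) ?g F)"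
      by (rule add) (use insert p mon g in auto)
    ultimately show ?case by simp
  qed
  have "Q (finsum (UP S) ?g {..K})" by (rule *) auto
  then show ?thesis using U.up_repr_le[OF d p] by simp
qed

definition convK :: "('a, 'm) ring_scheme \<Rightarrow> nat \<Rightarrow> (int \<Rightarrow> 'a) \<Rightarrow> (int \<Rightarrow> 'a) \<Rightarrow> int \<Rightarrow> 'a" where
  "convK R K g h n = (\<Oplus>\<^bsub>R\<^esub> m\<in>{- int K..int K}. g m \<otimes>\<^bsub>R\<^esub> h (n - m))"

locale uvs =
  fixes R :: "('a, 'm) ring_scheme" and f :: 'a
  assumes dom: "domain R" and fR: "f \<in> carrier R" and fnz: "f \<noteq> \<zero>\<^bsub>R\<^esub>" and fnu: "f \<notin> Units R"
begin

sublocale R: domain R by (rule dom)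
sublocale P1: UP_domain R "UP R" by unfold_locales
sublocale P2: UP_domain "UP R" "UP (UP R)" using UP_domain.intro[OF P1.UP_domain] by simp

definition M :: "'a \<Rightarrow> nat \<Rightarrow> nat \<Rightarrow> nat \<Rightarrow> nat \<Rightarrow> 'a" where
  "M a i j = monom (UP (UP R)) (monom (UP R) a i) j"

abbreviation c where "c \<equiv> wc R f"

lemma rawP: "p \<in> carrier (UP (UP R)) \<Longrightarrow> p j \<in> carrier (UP R)"
  using P2.coeff_closed[of p j] by (simp add: raw_coeff)

lemma rawR[simp]: "p \<in> carrier (UP (UP R)) \<Longrightarrow> p j i \<in> carrier R"
  using P1.coeff_closed[OF rawP[of p j], of i] rawP[of p j] by (simp add: raw_coeff)

lemma raw_add[simp]: assumes p: "p \<in> carrier (UP (UP R))" and q: "q \<in> carrier (UP (UP R))"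
  shows "(p \<oplus>\<^bsub>UP (UP R)\<^esub> q) j i = p j i \<oplus>\<^bsub>R\<^esub> q j i"
proof -
  have pq: "p \<oplus>\<^bsub>UP (UP R)\<^esub> q \<in> carrier (UP (UP R))" using p q by (rule P2.add.m_closed)
  have 1: "(p \<oplus>\<^bsub>UP (UP R)\<^esub> q) j = p j \<oplus>\<^bsub>UP R\<^esub> q j"
    using P2.coeff_add[OF p q, of j] unfolding raw_coeff[OF pq] raw_coeff[OF p] raw_coeff[OF q] .
  have pj: "p j \<in> carrier (UP R)" using p by (rule rawP)
  have qj: "q j \<in> carrier (UP R)" using q by (rule rawP)
  have pqj: "p j \<oplus>\<^bsub>UP R\<^esub> q j \<in> carrier (UP R)" using pj qj by (rule P1.add.m_closed)
  show ?thesis unfolding 1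
    using P1.coeff_add[OF pj qj, of i] unfolding raw_coeff[OF pqj] raw_coeff[OF pj] raw_coeff[OF qj] .
qed

lemma raw_zero1[simp]: "\<zero>\<^bsub>UP R\<^esub> i = \<zero>\<^bsub>R\<^esub>"
  using P1.coeff_zero[of i] unfolding raw_coeff[OF P1.zero_closed] .

lemma raw_zero0[simp]: "\<zero>\<^bsub>UP (UP R)\<^esub> j = \<zero>\<^bsub>UP R\<^esub>"
  using P2.coeff_zero[of j] unfolding raw_coeff[OF P2.zero_closed] .

lemma raw_zero[simp]: "\<zero>\<^bsub>UP (UP R)\<^esub> j i = \<zero>\<^bsub>R\<^esub>"
  by simp

lemma raw_M[simp]: assumes a: "a \<in> carrier R"
  shows "M a i j k l = (if k = j \<and> l = i then a else \<zero>\<^bsub>R\<^esub>)"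
proof -
  have m1: "monom (UP R) a i \<in> carrier (UP R)" using a by simp
  have m2: "monom (UP (UP R)) (monom (UP R) a i) j \<in> carrier (UP (UP R))" using m1 by simp
  have 1: "M a i j k = (if j = k then monom (UP R) a i else \<zero>\<^bsub>UP R\<^esub>)"
    using P2.coeff_monom[OF m1, of j k] unfolding raw_coeff[OF m2] M_def .
  have 2: "monom (UP R) a i l = (if i = l then a else \<zero>\<^bsub>R\<^esub>)"
    using P1.coeff_monom[OF a, of i l] unfolding raw_coeff[OF m1] .
  show ?thesis unfolding 1 using 2 by auto
qed

lemma M_closed[simp]: "a \<in> carrier R \<Longrightarrow> M a i j \<in> carrier (UP (UP R))"
  by (simp add: M_def)

lemma raw_deg: "p \<in> carrier (UP (UP R)) \<Longrightarrow> deg (UP R) p < j \<Longrightarrow> p j i = \<zero>\<^bsub>R\<^esub>"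
  using P2.deg_aboveD[of p j] by (simp add: raw_coeff)

lemma wcK_closed[simp]: "p \<in> carrier (UP (UP R)) \<Longrightarrow> wcK R f K p n \<in> carrier R"
  unfolding wcK_def by (intro R.finsum_closed) (auto simp: fR)

lemma wc_closed[simp]: "p \<in> carrier (UP (UP R)) \<Longrightarrow> c p n \<in> carrier R"
  unfolding wc_def by simp

lemma wcK_Suc: assumes p: "p \<in> carrier (UP (UP R))" and d: "deg (UP R) p < Suc K"
  shows "wcK R f (Suc K) p n = wcK R f K p n"
  unfolding wcK_def
  by (subst R.finsum_Suc) (auto simp: fR p raw_deg[OF p d])

lemma wcK_ext: assumes p: "p \<in> carrier (UP (UP R))" and d: "deg (UP R) p \<le> K"
  shows "wcK R f K p n = c p n"
  using d
proof (induction K rule: dec_induct)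
  case base then show ?case by (simp add: wc_def)
next
  case (step m)
  from step(1) have "deg (UP R) p < Suc m" by (simp only: less_Suc_eq_le)
  then have "wcK R f (Suc m) p n = wcK R f m p n" by (rule wcK_Suc[OF p])
  then show ?case using step.IH by (rule trans)
qed


lemma sum0: assumes "finite A" "\<And>k. k \<in> A \<Longrightarrow> g k = \<zero>\<^bsub>R\<^esub>"
  shows "finsum R g A = \<zero>\<^bsub>R\<^esub>"
proof -
  have "finsum R g A = finsum R (\<lambda>k. \<zero>\<^bsub>R\<^esub>) A"
    by (rule R.finsum_cong') (auto simp: assms)
  then show ?thesis by simp
qed

lemma sum1: assumes "finite A" "j \<in> A" "\<And>k. k \<in> A \<Longrightarrow> k \<noteq> j \<Longrightarrow> g k = \<zero>\<^bsub>R\<^esub>"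
   "\<And>k. k \<in> A \<Longrightarrow> g k \<in> carrier R"
  shows "finsum R g A = g j"
proof -
  have "finsum R g A = finsum R (\<lambda>k. if j = k then g k else \<zero>\<^bsub>R\<^esub>) A"
    by (rule R.finsum_cong') (auto simp: assms)
  also have "\<dots> = g j"
    by (rule R.finsum_singleton) (auto simp: assms)
  finally show ?thesis .
qed

lemma c_M: assumes a: "a \<in> carrier R"
  shows "c (M a i j) n = (if n = int i - int j then a \<otimes>\<^bsub>R\<^esub> f [^]\<^bsub>R\<^esub> j else \<zero>\<^bsub>R\<^esub>)"
proof -
  have d: "deg (UP R) (M a i j) \<le> j" unfolding M_def using a by (simp add: P2.deg_monom_le)
  have "c (M a i j) n = wcK R f j (M a i j) n" using wcK_ext[OF M_closed[OF a] d] by simp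
  also have "\<dots> = (if 0 \<le> n + int j then M a i j j (nat (n + int j)) \<otimes>\<^bsub>R\<^esub> f [^]\<^bsub>R\<^esub> j else \<zero>\<^bsub>R\<^esub>)"
    unfolding wcK_def by (rule sum1) (auto simp: a fR)
  also have "\<dots> = (if n = int i - int j then a \<otimes>\<^bsub>R\<^esub> f [^]\<^bsub>R\<^esub> j else \<zero>\<^bsub>R\<^esub>)"
    using a fR by auto
  finally show ?thesis .
qed

lemma c_zero[simp]: "c \<zero>\<^bsub>UP (UP R)\<^esub> n = \<zero>\<^bsub>R\<^esub>"
  unfolding wc_def wcK_def by (rule sum0) (auto simp: fR)

lemma c_add: assumes p: "p \<in> carrier (UP (UP R))" and q: "q \<in> carrier (UP (UP R))"
  shows "c (p \<oplus>\<^bsub>UP (UP R)\<^esub> q) n = c p n \<oplus>\<^bsub>R\<^esub> c q n"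
proof -
  define K where "K = max (deg (UP R) p) (deg (UP R) q)"
  have pq: "p \<oplus>\<^bsub>UP (UP R)\<^esub> q \<in> carrier (UP (UP R))" using p q by simp
  have d1: "deg (UP R) p \<le> K" "deg (UP R) q \<le> K" unfolding K_def by auto
  have d3: "deg (UP R) (p \<oplus>\<^bsub>UP (UP R)\<^esub> q) \<le> K" using P2.deg_add[OF p q] unfolding K_def .
  have "wcK R f K (p \<oplus>\<^bsub>UP (UP R)\<^esub> q) n = wcK R f K p n \<oplus>\<^bsub>R\<^esub> wcK R f K q n"
    unfolding wcK_def
  proof (subst R.finsum_addf[symmetric])
    show "(\<Oplus>\<^bsub>R\<^esub>j\<in>{..K}. if 0 \<le> n + int j then (p \<oplus>\<^bsub>UP (UP R)\<^esub> q) j (nat (n + int j)) \<otimes>\<^bsub>R\<^esub> f [^]\<^bsub>R\<^esub> j else \<zero>\<^bsub>R\<^esub>) =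
    (\<Oplus>\<^bsub>R\<^esub>j\<in>{..K}. (if 0 \<le> n + int j then p j (nat (n + int j)) \<otimes>\<^bsub>R\<^esub> f [^]\<^bsub>R\<^esub> j else \<zero>\<^bsub>R\<^esub>) \<oplus>\<^bsub>R\<^esub>
           (if 0 \<le> n + int j then q j (nat (n + int j)) \<otimes>\<^bsub>R\<^esub> f [^]\<^bsub>R\<^esub> j else \<zero>\<^bsub>R\<^esub>))"
      by (rule R.finsum_cong') (auto simp: p q fR R.l_distr)
  qed (auto simp: p q fR)
  then show ?thesis using wcK_ext[OF p d1(1)] wcK_ext[OF q d1(2)] wcK_ext[OF pq d3] by simp
qed

lemma c_neg: assumes p: "p \<in> carrier (UP (UP R))"
  shows "c (\<ominus>\<^bsub>UP (UP R)\<^esub> p) n = \<ominus>\<^bsub>R\<^esub> c p n"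
proof -
  have np: "\<ominus>\<^bsub>UP (UP R)\<^esub> p \<in> carrier (UP (UP R))" using p by simp
  have "c (\<ominus>\<^bsub>UP (UP R)\<^esub> p) n \<oplus>\<^bsub>R\<^esub> c p n = \<zero>\<^bsub>R\<^esub>"
    using c_add[OF np p, of n] P2.l_neg[OF p] by simp
  then show ?thesis using R.minus_equality[of "c (\<ominus>\<^bsub>UP (UP R)\<^esub> p) n" "c p n"] p np by simp
qed

lemma c_minus: assumes p: "p \<in> carrier (UP (UP R))" and q: "q \<in> carrier (UP (UP R))"
  shows "c (p \<ominus>\<^bsub>UP (UP R)\<^esub> q) n = c p n \<ominus>\<^bsub>R\<^esub> c q n"
  unfolding a_minus_def using c_add[OF p, of "\<ominus>\<^bsub>UP (UP R)\<^esub> q" n] c_neg[OF q] q by simp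


lemma up2_induct:
  assumes p: "p \<in> carrier (UP (UP R))" and dv: "deg (UP R) p \<le> Kv" and du: "\<And>j. deg R (p j) \<le> Ku"
   and z: "Q \<zero>\<^bsub>UP (UP R)\<^esub>"
   and add: "\<And>a b. a \<in> carrier (UP (UP R)) \<Longrightarrow> b \<in> carrier (UP (UP R)) \<Longrightarrow> Q a \<Longrightarrow> Q b \<Longrightarrow> Q (a \<oplus>\<^bsub>UP (UP R)\<^esub> b)"
   and mon: "\<And>i j. i \<le> Ku \<Longrightarrow> j \<le> Kv \<Longrightarrow> Q (M (p j i) i j)"
  shows "Q p"
proof (rule up_induct_le[OF P1.UP_ring p dv, of Q, OF z add])
  fix j assume j: "j \<le> Kv"
  have pj: "p j \<in> carrier (UP R)" using p by (rule rawP)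
  show "Q (monom (UP (UP R)) (coeff (UP (UP R)) p j) j)"
    unfolding raw_coeff[OF p]
  proof (rule up_induct_le[OF R.ring_axioms pj du, of "\<lambda>a. Q (monom (UP (UP R)) a j)"])
    show "Q (monom (UP (UP R)) \<zero>\<^bsub>UP R\<^esub> j)" using z by simp
  next
    fix a b assume a: "a \<in> carrier (UP R)" and b: "b \<in> carrier (UP R)"
      and qa: "Q (monom (UP (UP R)) a j)" and qb: "Q (monom (UP (UP R)) b j)"
    show "Q (monom (UP (UP R)) (a \<oplus>\<^bsub>UP R\<^esub> b) j)"
      using add[OF _ _ qa qb] a b by simp
  next
    fix i assume i: "i \<le> Ku"
    show "Q (monom (UP (UP R)) (monom (UP R) (coeff (UP R) (p j) i) i) j)"
      using mon[OF i j] unfolding raw_coeff[OF pj] M_def .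
  qed
qed (auto)

lemma deg_bound: assumes p: "p \<in> carrier (UP (UP R))"
  shows "\<exists>K. deg (UP R) p \<le> K \<and> (\<forall>j. deg R (p j) \<le> K)"
proof -
  define K where "K = max (deg (UP R) p) (Max ((\<lambda>j. deg R (p j)) ` {..deg (UP R) p}))"
  have "deg R (p j) \<le> K" for j
  proof (cases "j \<le> deg (UP R) p")
    case True then show ?thesis unfolding K_def
      by (metis (no_types, lifting) Max_ge atMost_iff finite_atMost finite_imageI image_eqI max.coboundedI2)
  next
    case False
    then have "coeff (UP (UP R)) p j = \<zero>\<^bsub>UP R\<^esub>" using P2.deg_aboveD[OF _ p] by simp
    then have "p j = \<zero>\<^bsub>UP R\<^esub>" unfolding raw_coeff[OF p] .
    then show ?thesis by simp
  qed
  moreover have "deg (UP R) p \<le> K" unfolding K_def by simp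
  ultimately show ?thesis by blast
qed


lemma conv_closed: "(\<And>m. g m \<in> carrier R) \<Longrightarrow> (\<And>m. h m \<in> carrier R) \<Longrightarrow> convK R K g h n \<in> carrier R"
  unfolding convK_def by (intro R.finsum_closed) auto

lemma conv_addl: assumes "\<And>m. g1 m \<in> carrier R" "\<And>m. g2 m \<in> carrier R" "\<And>m. h m \<in> carrier R"
  shows "convK R K (\<lambda>m. g1 m \<oplus>\<^bsub>R\<^esub> g2 m) h n = convK R K g1 h n \<oplus>\<^bsub>R\<^esub> convK R K g2 h n"
  unfolding convK_def
  by (subst R.finsum_addf[symmetric]) (auto intro!: R.finsum_cong' simp: assms R.l_distr)

lemma conv_addr: assumes "\<And>m. g m \<in> carrier R" "\<And>m. h1 m \<in> carrier R" "\<And>m. h2 m \<in> carrier R"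
  shows "convK R K g (\<lambda>m. h1 m \<oplus>\<^bsub>R\<^esub> h2 m) n = convK R K g h1 n \<oplus>\<^bsub>R\<^esub> convK R K g h2 n"
  unfolding convK_def
  by (subst R.finsum_addf[symmetric]) (auto intro!: R.finsum_cong' simp: assms R.r_distr)

lemma conv_0l: assumes "\<And>m. h m \<in> carrier R" shows "convK R K (\<lambda>m. \<zero>\<^bsub>R\<^esub>) h n = \<zero>\<^bsub>R\<^esub>"
  unfolding convK_def by (rule sum0) (auto simp: assms)

lemma conv_0r: assumes "\<And>m. g m \<in> carrier R" shows "convK R K g (\<lambda>m. \<zero>\<^bsub>R\<^esub>) n = \<zero>\<^bsub>R\<^esub>"
  unfolding convK_def by (rule sum0) (auto simp: assms)

lemma c_add_fun: "p \<in> carrier (UP (UP R)) \<Longrightarrow> q \<in> carrier (UP (UP R)) \<Longrightarrow>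
  c (p \<oplus>\<^bsub>UP (UP R)\<^esub> q) = (\<lambda>m. c p m \<oplus>\<^bsub>R\<^esub> c q m)"
  by (rule ext) (rule c_add)

lemma c_zero_fun: "c \<zero>\<^bsub>UP (UP R)\<^esub> = (\<lambda>m. \<zero>\<^bsub>R\<^esub>)"
  by (rule ext) simp

lemma MM: assumes a: "a \<in> carrier R" and b: "b \<in> carrier R"
  shows "M a i j \<otimes>\<^bsub>UP (UP R)\<^esub> M b k l = M (a \<otimes>\<^bsub>R\<^esub> b) (i + k) (j + l)"
  unfolding M_def using a b by simp

lemma c_MM: assumes a: "a \<in> carrier R" and b: "b \<in> carrier R" and i: "i \<le> K" and j: "j \<le> K"
  shows "c (M a i j \<otimes>\<^bsub>UP (UP R)\<^esub> M b k l) n = convK R K (c (M a i j)) (c (M b k l)) n"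
proof -
  define m0 where "m0 = int i - int j"
  have cl: "c (M b k l) x \<in> carrier R" for x using b by simp
  have "convK R K (c (M a i j)) (c (M b k l)) n = c (M a i j) m0 \<otimes>\<^bsub>R\<^esub> c (M b k l) (n - m0)"
    unfolding convK_def
  proof (rule sum1)
    show "m0 \<in> {- int K..int K}" using i j unfolding m0_def by auto
  next
    fix m assume "m \<noteq> m0"
    then show "c (M a i j) m \<otimes>\<^bsub>R\<^esub> c (M b k l) (n - m) = \<zero>\<^bsub>R\<^esub>"
      unfolding c_M[OF a] m0_def using cl by simp
  qed (auto simp: a b)
  also have "\<dots> = c (M (a \<otimes>\<^bsub>R\<^esub> b) (i + k) (j + l)) n"
    unfolding c_M[OF a] c_M[OF b] c_M[OF R.m_closed[OF a b]] m0_def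
    using a b fR
    by (auto simp: R.nat_pow_mult[symmetric] R.m_ac)
  finally show ?thesis unfolding MM[OF a b] by simp
qed


lemma c_Mq: assumes a: "a \<in> carrier R" and i: "i \<le> K" and j: "j \<le> K" and q: "q \<in> carrier (UP (UP R))"
  shows "c (M a i j \<otimes>\<^bsub>UP (UP R)\<^esub> q) n = convK R K (c (M a i j)) (c q) n"
proof -
  obtain Kq where Kq: "deg (UP R) q \<le> Kq" "\<And>j. deg R (q j) \<le> Kq" using deg_bound[OF q] by blast
  have Ma: "M a i j \<in> carrier (UP (UP R))" using a by simp
  have "\<forall>n. c (M a i j \<otimes>\<^bsub>UP (UP R)\<^esub> q) n = convK R K (c (M a i j)) (c q) n"
  proof (rule up2_induct[OF q Kq(1) Kq(2), of "\<lambda>q. \<forall>n. c (M a i j \<otimes>\<^bsub>UP (UP R)\<^esub> q) n = convK R K (c (M a i j)) (c q) n"])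
    show "\<forall>n. c (M a i j \<otimes>\<^bsub>UP (UP R)\<^esub> \<zero>\<^bsub>UP (UP R)\<^esub>) n = convK R K (c (M a i j)) (c \<zero>\<^bsub>UP (UP R)\<^esub>) n"
      using Ma by (simp add: c_zero_fun conv_0r)
  next
    fix x y assume x: "x \<in> carrier (UP (UP R))" and y: "y \<in> carrier (UP (UP R))"
      and hx: "\<forall>n. c (M a i j \<otimes>\<^bsub>UP (UP R)\<^esub> x) n = convK R K (c (M a i j)) (c x) n"
      and hy: "\<forall>n. c (M a i j \<otimes>\<^bsub>UP (UP R)\<^esub> y) n = convK R K (c (M a i j)) (c y) n"
    show "\<forall>n. c (M a i j \<otimes>\<^bsub>UP (UP R)\<^esub> (x \<oplus>\<^bsub>UP (UP R)\<^esub> y)) n = convK R K (c (M a i j)) (c (x \<oplus>\<^bsub>UP (UP R)\<^esub> y)) n"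
    proof
      fix n
      have Mx: "M a i j \<otimes>\<^bsub>UP (UP R)\<^esub> x \<in> carrier (UP (UP R))" using Ma x by simp
      have My: "M a i j \<otimes>\<^bsub>UP (UP R)\<^esub> y \<in> carrier (UP (UP R))" using Ma y by simp
      have "c (M a i j \<otimes>\<^bsub>UP (UP R)\<^esub> (x \<oplus>\<^bsub>UP (UP R)\<^esub> y)) n
          = c (M a i j \<otimes>\<^bsub>UP (UP R)\<^esub> x \<oplus>\<^bsub>UP (UP R)\<^esub> M a i j \<otimes>\<^bsub>UP (UP R)\<^esub> y) n"
        using P2.r_distr[OF x y Ma] by simp
      also have "\<dots> = c (M a i j \<otimes>\<^bsub>UP (UP R)\<^esub> x) n \<oplus>\<^bsub>R\<^esub> c (M a i j \<otimes>\<^bsub>UP (UP R)\<^esub> y) n"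
        by (rule c_add[OF Mx My])
      also have "\<dots> = convK R K (c (M a i j)) (c x) n \<oplus>\<^bsub>R\<^esub> convK R K (c (M a i j)) (c y) n"
        using hx hy by simp
      also have "\<dots> = convK R K (c (M a i j)) (\<lambda>m. c x m \<oplus>\<^bsub>R\<^esub> c y m) n"
        by (rule conv_addr[symmetric]) (use Ma x y in simp_all)
      also have "\<dots> = convK R K (c (M a i j)) (c (x \<oplus>\<^bsub>UP (UP R)\<^esub> y)) n"
        using c_add_fun[OF x y] by simp
      finally show "c (M a i j \<otimes>\<^bsub>UP (UP R)\<^esub> (x \<oplus>\<^bsub>UP (UP R)\<^esub> y)) n = convK R K (c (M a i j)) (c (x \<oplus>\<^bsub>UP (UP R)\<^esub> y)) n" .
    qed
  next
    fix i' j' assume "i' \<le> Kq" "j' \<le> Kq"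
    show "\<forall>n. c (M a i j \<otimes>\<^bsub>UP (UP R)\<^esub> M (q j' i') i' j') n = convK R K (c (M a i j)) (c (M (q j' i') i' j')) n"
      using c_MM[OF a _ i j] q by simp
  qed
  then show ?thesis by blast
qed

lemma c_conv_K: assumes p: "p \<in> carrier (UP (UP R))" and q: "q \<in> carrier (UP (UP R))"
  and Kp: "deg (UP R) p \<le> K" "\<And>j. deg R (p j) \<le> K"
  shows "c (p \<otimes>\<^bsub>UP (UP R)\<^esub> q) n = convK R K (c p) (c q) n"
proof -
  have "\<forall>n. c (p \<otimes>\<^bsub>UP (UP R)\<^esub> q) n = convK R K (c p) (c q) n"
  proof (rule up2_induct[OF p Kp(1) Kp(2), of "\<lambda>p. \<forall>n. c (p \<otimes>\<^bsub>UP (UP R)\<^esub> q) n = convK R K (c p) (c q) n"])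
    show "\<forall>n. c (\<zero>\<^bsub>UP (UP R)\<^esub> \<otimes>\<^bsub>UP (UP R)\<^esub> q) n = convK R K (c \<zero>\<^bsub>UP (UP R)\<^esub>) (c q) n"
      using q by (simp add: c_zero_fun conv_0l)
  next
    fix x y assume x: "x \<in> carrier (UP (UP R))" and y: "y \<in> carrier (UP (UP R))"
      and hx: "\<forall>n. c (x \<otimes>\<^bsub>UP (UP R)\<^esub> q) n = convK R K (c x) (c q) n"
      and hy: "\<forall>n. c (y \<otimes>\<^bsub>UP (UP R)\<^esub> q) n = convK R K (c y) (c q) n"
    show "\<forall>n. c ((x \<oplus>\<^bsub>UP (UP R)\<^esub> y) \<otimes>\<^bsub>UP (UP R)\<^esub> q) n = convK R K (c (x \<oplus>\<^bsub>UP (UP R)\<^esub> y)) (c q) n"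
    proof
      fix n
      have Mx: "x \<otimes>\<^bsub>UP (UP R)\<^esub> q \<in> carrier (UP (UP R))" using q x by simp
      have My: "y \<otimes>\<^bsub>UP (UP R)\<^esub> q \<in> carrier (UP (UP R))" using q y by simp
      have "c ((x \<oplus>\<^bsub>UP (UP R)\<^esub> y) \<otimes>\<^bsub>UP (UP R)\<^esub> q) n
          = c (x \<otimes>\<^bsub>UP (UP R)\<^esub> q \<oplus>\<^bsub>UP (UP R)\<^esub> y \<otimes>\<^bsub>UP (UP R)\<^esub> q) n"
        using P2.l_distr[OF x y q] by simp
      also have "\<dots> = c (x \<otimes>\<^bsub>UP (UP R)\<^esub> q) n \<oplus>\<^bsub>R\<^esub> c (y \<otimes>\<^bsub>UP (UP R)\<^esub> q) n"
        by (rule c_add[OF Mx My])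
      also have "\<dots> = convK R K (c x) (c q) n \<oplus>\<^bsub>R\<^esub> convK R K (c y) (c q) n"
        using hx hy by simp
      also have "\<dots> = convK R K (\<lambda>m. c x m \<oplus>\<^bsub>R\<^esub> c y m) (c q) n"
        by (rule conv_addl[symmetric]) (use q x y in simp_all)
      also have "\<dots> = convK R K (c (x \<oplus>\<^bsub>UP (UP R)\<^esub> y)) (c q) n"
        using c_add_fun[OF x y] by simp
      finally show "c ((x \<oplus>\<^bsub>UP (UP R)\<^esub> y) \<otimes>\<^bsub>UP (UP R)\<^esub> q) n = convK R K (c (x \<oplus>\<^bsub>UP (UP R)\<^esub> y)) (c q) n" .
    qed
  next
    fix i j assume "i \<le> K" "j \<le> K"
    then show "\<forall>n. c (M (p j i) i j \<otimes>\<^bsub>UP (UP R)\<^esub> q) n = convK R K (c (M (p j i) i j)) (c q) n"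
      using c_Mq[OF _ _ _ q] p by simp
  qed
  then show ?thesis by blast
qed

lemma c_support_K: assumes p: "p \<in> carrier (UP (UP R))"
  and Kp: "deg (UP R) p \<le> K" "\<And>j. deg R (p j) \<le> K"
  shows "m < - int K \<or> int K < m \<Longrightarrow> c p m = \<zero>\<^bsub>R\<^esub>"
proof -
  have "\<forall>m. m < - int K \<or> int K < m \<longrightarrow> c p m = \<zero>\<^bsub>R\<^esub>"
  proof (rule up2_induct[OF p Kp(1) Kp(2), of "\<lambda>p. \<forall>m. m < - int K \<or> int K < m \<longrightarrow> c p m = \<zero>\<^bsub>R\<^esub>"])
    fix x y assume "x \<in> carrier (UP (UP R))" "y \<in> carrier (UP (UP R))"
      "\<forall>m. m < - int K \<or> int K < m \<longrightarrow> c x m = \<zero>\<^bsub>R\<^esub>" "\<forall>m. m < - int K \<or> int K < m \<longrightarrow> c y m = \<zero>\<^bsub>R\<^esub>"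
    then show "\<forall>m. m < - int K \<or> int K < m \<longrightarrow> c (x \<oplus>\<^bsub>UP (UP R)\<^esub> y) m = \<zero>\<^bsub>R\<^esub>"
      using c_add by (metis R.l_zero R.zero_closed)
  next
    fix i j assume "i \<le> K" "j \<le> K"
    then show "\<forall>m. m < - int K \<or> int K < m \<longrightarrow> c (M (p j i) i j) m = \<zero>\<^bsub>R\<^esub>"
      using p c_M[of "p j i" i j] by simp
  qed simp
  then show "m < - int K \<or> int K < m \<Longrightarrow> c p m = \<zero>\<^bsub>R\<^esub>" by blast
qed

lemma c_conv: assumes p: "p \<in> carrier (UP (UP R))" and q: "q \<in> carrier (UP (UP R))"
  shows "\<exists>K. (\<forall>m. c p m \<noteq> \<zero>\<^bsub>R\<^esub> \<longrightarrow> - int K \<le> m \<and> m \<le> int K) \<and>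
             (\<forall>n. c (p \<otimes>\<^bsub>UP (UP R)\<^esub> q) n = convK R K (c p) (c q) n)"
proof -
  obtain K where K: "deg (UP R) p \<le> K" "\<And>j. deg R (p j) \<le> K" using deg_bound[OF p] by blast
  have 1: "\<forall>m. c p m \<noteq> \<zero>\<^bsub>R\<^esub> \<longrightarrow> - int K \<le> m \<and> m \<le> int K"
  proof (intro allI impI)
    fix m assume "c p m \<noteq> \<zero>\<^bsub>R\<^esub>"
    then show "- int K \<le> m \<and> m \<le> int K" using c_support_K[OF p K, of m] by linarith
  qed
  have 2: "\<forall>n. c (p \<otimes>\<^bsub>UP (UP R)\<^esub> q) n = convK R K (c p) (c q) n"
    using c_conv_K[OF p q K] by blast
  show ?thesis using 1 2 by blast
qed


abbreviation I where "I \<equiv> uv_ideal R f"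

lemma var_u_M: "var_u R = M \<one>\<^bsub>R\<^esub> 1 0" unfolding var_u_def M_def ..
lemma var_v_M: "var_v R = M \<one>\<^bsub>R\<^esub> 0 1" unfolding var_v_def M_def by simp
lemma const2_M: "const2 R a = M a 0 0" unfolding const2_def M_def ..

lemma gen_M: "var_u R \<otimes>\<^bsub>UP (UP R)\<^esub> var_v R \<ominus>\<^bsub>UP (UP R)\<^esub> const2 R f = M \<one>\<^bsub>R\<^esub> 1 1 \<ominus>\<^bsub>UP (UP R)\<^esub> M f 0 0"
  unfolding var_u_M var_v_M const2_M using MM[of "\<one>\<^bsub>R\<^esub>" "\<one>\<^bsub>R\<^esub>" 1 0 0 1] by simp

lemma gen_closed: "M \<one>\<^bsub>R\<^esub> 1 1 \<ominus>\<^bsub>UP (UP R)\<^esub> M f 0 0 \<in> carrier (UP (UP R))"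
  using fR by simp

lemma I_eq: "I = PIdl\<^bsub>UP (UP R)\<^esub> (M \<one>\<^bsub>R\<^esub> 1 1 \<ominus>\<^bsub>UP (UP R)\<^esub> M f 0 0)"
  unfolding uv_ideal_def gen_M ..

sublocale I: ideal I "UP (UP R)"
  unfolding I_eq by (rule P2.cgenideal_ideal[OF gen_closed])

lemma gen_in_I: "M \<one>\<^bsub>R\<^esub> 1 1 \<ominus>\<^bsub>UP (UP R)\<^esub> M f 0 0 \<in> I"
  unfolding I_eq by (rule P2.cgenideal_self[OF gen_closed])

lemma c_gen: "c (M \<one>\<^bsub>R\<^esub> 1 1 \<ominus>\<^bsub>UP (UP R)\<^esub> M f 0 0) n = \<zero>\<^bsub>R\<^esub>"
  using fR by (simp add: c_minus c_M)

lemma c_I: assumes x: "x \<in> I" shows "c x n = \<zero>\<^bsub>R\<^esub>"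
proof -
  obtain y where y: "y \<in> carrier (UP (UP R))" and xy: "x = y \<otimes>\<^bsub>UP (UP R)\<^esub> (M \<one>\<^bsub>R\<^esub> 1 1 \<ominus>\<^bsub>UP (UP R)\<^esub> M f 0 0)"
    using x unfolding I_eq cgenideal_def by blast
  obtain K where K: "\<forall>n. c x n = convK R K (c y) (c (M \<one>\<^bsub>R\<^esub> 1 1 \<ominus>\<^bsub>UP (UP R)\<^esub> M f 0 0)) n"
    using c_conv[OF y gen_closed] unfolding xy by blast
  have "c (M \<one>\<^bsub>R\<^esub> 1 1 \<ominus>\<^bsub>UP (UP R)\<^esub> M f 0 0) = (\<lambda>m. \<zero>\<^bsub>R\<^esub>)" using c_gen by (intro ext)
  then show ?thesis using K conv_0r[of "c y" K n] y by simp
qed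

lemma c_eq_I: assumes x: "x \<in> carrier (UP (UP R))" and y: "y \<in> carrier (UP (UP R))"
  and xy: "x \<ominus>\<^bsub>UP (UP R)\<^esub> y \<in> I" shows "c x n = c y n"
proof -
  have "c x n \<ominus>\<^bsub>R\<^esub> c y n = \<zero>\<^bsub>R\<^esub>" using c_I[OF xy, of n] c_minus[OF x y] by simp
  moreover have "c x n = (c x n \<ominus>\<^bsub>R\<^esub> c y n) \<oplus>\<^bsub>R\<^esub> c y n"
    using wc_closed[OF x, of n] wc_closed[OF y, of n] by algebra
  ultimately show ?thesis using y by simp
qed

lemma pow_diff_I: assumes x: "x \<in> carrier (UP (UP R))" and y: "y \<in> carrier (UP (UP R))"
  and xy: "x \<ominus>\<^bsub>UP (UP R)\<^esub> y \<in> I"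
  shows "x [^]\<^bsub>UP (UP R)\<^esub> (k::nat) \<ominus>\<^bsub>UP (UP R)\<^esub> y [^]\<^bsub>UP (UP R)\<^esub> k \<in> I"
proof (induction k)
  case 0
  have "\<one>\<^bsub>UP (UP R)\<^esub> \<ominus>\<^bsub>UP (UP R)\<^esub> \<one>\<^bsub>UP (UP R)\<^esub> = \<zero>\<^bsub>UP (UP R)\<^esub>"
    using P2.r_neg[OF P2.one_closed] by (simp add: a_minus_def)
  then show ?case unfolding P2.nat_pow_0 using additive_subgroup.zero_closed[OF I.additive_subgroup_axioms] by metis
next
  case (Suc k)
  have xk: "x [^]\<^bsub>UP (UP R)\<^esub> k \<in> carrier (UP (UP R))" using x by simp
  have yk: "y [^]\<^bsub>UP (UP R)\<^esub> k \<in> carrier (UP (UP R))" using y by simp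
  have eq: "x [^]\<^bsub>UP (UP R)\<^esub> Suc k \<ominus>\<^bsub>UP (UP R)\<^esub> y [^]\<^bsub>UP (UP R)\<^esub> Suc k =
     x [^]\<^bsub>UP (UP R)\<^esub> k \<otimes>\<^bsub>UP (UP R)\<^esub> (x \<ominus>\<^bsub>UP (UP R)\<^esub> y) \<oplus>\<^bsub>UP (UP R)\<^esub>
     (x [^]\<^bsub>UP (UP R)\<^esub> k \<ominus>\<^bsub>UP (UP R)\<^esub> y [^]\<^bsub>UP (UP R)\<^esub> k) \<otimes>\<^bsub>UP (UP R)\<^esub> y"
    unfolding P2.nat_pow_Suc using x y xk yk by algebra
  show ?case unfolding eq
    by (intro I.a_closed I.I_l_closed I.I_r_closed xy Suc.IH xk y)
qed

definition normal :: "(nat \<Rightarrow> nat \<Rightarrow> 'a) \<Rightarrow> bool" where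
  "normal q \<longleftrightarrow> (\<forall>i j. 0 < i \<longrightarrow> 0 < j \<longrightarrow> q j i = \<zero>\<^bsub>R\<^esub>)"

lemma M_nf: assumes r: "r \<in> carrier R"
  shows "M r i j \<ominus>\<^bsub>UP (UP R)\<^esub> M (r \<otimes>\<^bsub>R\<^esub> f [^]\<^bsub>R\<^esub> min i j) (i - min i j) (j - min i j) \<in> I"
proof -
  define m where "m = min i j"
  define Xm where "Xm = M r (i - m) (j - m)"
  have Xm: "Xm \<in> carrier (UP (UP R))" unfolding Xm_def using r by simp
  have p1: "M \<one>\<^bsub>R\<^esub> 1 1 [^]\<^bsub>UP (UP R)\<^esub> m = M \<one>\<^bsub>R\<^esub> m m"
    unfolding M_def by (simp add: P2.monom_pow P1.monom_pow)
  have p2: "M f 0 0 [^]\<^bsub>UP (UP R)\<^esub> m = M (f [^]\<^bsub>R\<^esub> m) 0 0"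
    unfolding M_def using fR by (simp add: P2.monom_pow P1.monom_pow)
  have e1: "M r i j = Xm \<otimes>\<^bsub>UP (UP R)\<^esub> M \<one>\<^bsub>R\<^esub> 1 1 [^]\<^bsub>UP (UP R)\<^esub> m"
    unfolding p1 Xm_def using MM[OF r R.one_closed, of "i - m" "j - m" m m] r
    by (simp add: m_def)
  have e2: "M (r \<otimes>\<^bsub>R\<^esub> f [^]\<^bsub>R\<^esub> m) (i - m) (j - m) = Xm \<otimes>\<^bsub>UP (UP R)\<^esub> M f 0 0 [^]\<^bsub>UP (UP R)\<^esub> m"
    unfolding p2 Xm_def using MM[OF r, of "f [^]\<^bsub>R\<^esub> m" "i - m" "j - m" 0 0] r fR by simp
  have A: "M \<one>\<^bsub>R\<^esub> 1 1 [^]\<^bsub>UP (UP R)\<^esub> m \<in> carrier (UP (UP R))" by simp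
  have B: "M f 0 0 [^]\<^bsub>UP (UP R)\<^esub> m \<in> carrier (UP (UP R))" using fR by simp
  have "M r i j \<ominus>\<^bsub>UP (UP R)\<^esub> M (r \<otimes>\<^bsub>R\<^esub> f [^]\<^bsub>R\<^esub> m) (i - m) (j - m) =
        Xm \<otimes>\<^bsub>UP (UP R)\<^esub> (M \<one>\<^bsub>R\<^esub> 1 1 [^]\<^bsub>UP (UP R)\<^esub> m \<ominus>\<^bsub>UP (UP R)\<^esub> M f 0 0 [^]\<^bsub>UP (UP R)\<^esub> m)"
    unfolding e1 e2 using Xm A B by algebra
  moreover have "Xm \<otimes>\<^bsub>UP (UP R)\<^esub> (M \<one>\<^bsub>R\<^esub> 1 1 [^]\<^bsub>UP (UP R)\<^esub> m \<ominus>\<^bsub>UP (UP R)\<^esub> M f 0 0 [^]\<^bsub>UP (UP R)\<^esub> m) \<in> I"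
    by (rule I.I_l_closed[OF pow_diff_I Xm]) (use gen_in_I fR in simp_all)
  ultimately show ?thesis unfolding m_def by simp
qed


lemma nf_exists: assumes p: "p \<in> carrier (UP (UP R))"
  shows "\<exists>q\<in>carrier (UP (UP R)). normal q \<and> p \<ominus>\<^bsub>UP (UP R)\<^esub> q \<in> I"
proof -
  obtain K where K: "deg (UP R) p \<le> K" "\<And>j. deg R (p j) \<le> K" using deg_bound[OF p] by blast
  show ?thesis
  proof (rule up2_induct[OF p K(1) K(2), of "\<lambda>p. \<exists>q\<in>carrier (UP (UP R)). normal q \<and> p \<ominus>\<^bsub>UP (UP R)\<^esub> q \<in> I"])
    have "\<zero>\<^bsub>UP (UP R)\<^esub> \<ominus>\<^bsub>UP (UP R)\<^esub> \<zero>\<^bsub>UP (UP R)\<^esub> = \<zero>\<^bsub>UP (UP R)\<^esub>"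
      by (simp add: a_minus_def)
    then have "\<zero>\<^bsub>UP (UP R)\<^esub> \<ominus>\<^bsub>UP (UP R)\<^esub> \<zero>\<^bsub>UP (UP R)\<^esub> \<in> I"
      using additive_subgroup.zero_closed[OF I.additive_subgroup_axioms] by metis
    moreover have "normal \<zero>\<^bsub>UP (UP R)\<^esub>" unfolding normal_def by simp
    ultimately show "\<exists>q\<in>carrier (UP (UP R)). normal q \<and> \<zero>\<^bsub>UP (UP R)\<^esub> \<ominus>\<^bsub>UP (UP R)\<^esub> q \<in> I"
      by blast
  next
    fix a b assume a: "a \<in> carrier (UP (UP R))" and b: "b \<in> carrier (UP (UP R))"
      and "\<exists>q\<in>carrier (UP (UP R)). normal q \<and> a \<ominus>\<^bsub>UP (UP R)\<^esub> q \<in> I"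
      and "\<exists>q\<in>carrier (UP (UP R)). normal q \<and> b \<ominus>\<^bsub>UP (UP R)\<^esub> q \<in> I"
    then obtain q1 q2 where q1: "q1 \<in> carrier (UP (UP R))" "normal q1" "a \<ominus>\<^bsub>UP (UP R)\<^esub> q1 \<in> I"
      and q2: "q2 \<in> carrier (UP (UP R))" "normal q2" "b \<ominus>\<^bsub>UP (UP R)\<^esub> q2 \<in> I" by blast
    have "normal (q1 \<oplus>\<^bsub>UP (UP R)\<^esub> q2)" using q1 q2 unfolding normal_def by simp
    moreover have "(a \<oplus>\<^bsub>UP (UP R)\<^esub> b) \<ominus>\<^bsub>UP (UP R)\<^esub> (q1 \<oplus>\<^bsub>UP (UP R)\<^esub> q2) =
       (a \<ominus>\<^bsub>UP (UP R)\<^esub> q1) \<oplus>\<^bsub>UP (UP R)\<^esub> (b \<ominus>\<^bsub>UP (UP R)\<^esub> q2)"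
      using a b q1(1) q2(1) by algebra
    moreover have "(a \<ominus>\<^bsub>UP (UP R)\<^esub> q1) \<oplus>\<^bsub>UP (UP R)\<^esub> (b \<ominus>\<^bsub>UP (UP R)\<^esub> q2) \<in> I"
      using q1(3) q2(3) by (rule I.a_closed)
    moreover have "q1 \<oplus>\<^bsub>UP (UP R)\<^esub> q2 \<in> carrier (UP (UP R))" using q1 q2 by simp
    ultimately show "\<exists>q\<in>carrier (UP (UP R)). normal q \<and> (a \<oplus>\<^bsub>UP (UP R)\<^esub> b) \<ominus>\<^bsub>UP (UP R)\<^esub> q \<in> I"
      by metis
  next
    fix i j
    define r where "r = p j i"
    have r: "r \<in> carrier R" unfolding r_def using p by simp
    let ?q = "M (r \<otimes>\<^bsub>R\<^esub> f [^]\<^bsub>R\<^esub> min i j) (i - min i j) (j - min i j)"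
    have "normal ?q" unfolding normal_def using r fR by auto
    moreover have "?q \<in> carrier (UP (UP R))" using r fR by simp
    ultimately show "\<exists>q\<in>carrier (UP (UP R)). normal q \<and> M (p j i) i j \<ominus>\<^bsub>UP (UP R)\<^esub> q \<in> I"
      using M_nf[OF r, of i j] unfolding r_def by blast
  qed
qed

lemma c_normal: assumes q: "q \<in> carrier (UP (UP R))" and nq: "normal q"
  shows "c q n = (if 0 \<le> n then q 0 (nat n) else q (nat (- n)) 0 \<otimes>\<^bsub>R\<^esub> f [^]\<^bsub>R\<^esub> nat (- n))"
proof -
  define K where "K = max (deg (UP R) q) (nat (- n))"
  define j0 where "j0 = (if 0 \<le> n then 0 else nat (- n))"
  have "c q n = wcK R f K q n" using wcK_ext[OF q, of K n] unfolding K_def by simp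
  also have "\<dots> = (if 0 \<le> n + int j0 then q j0 (nat (n + int j0)) \<otimes>\<^bsub>R\<^esub> f [^]\<^bsub>R\<^esub> j0 else \<zero>\<^bsub>R\<^esub>)"
    unfolding wcK_def
  proof (rule sum1)
    show "j0 \<in> {..K}" unfolding j0_def K_def by auto
  next
    fix k assume "k \<in> {..K}" "k \<noteq> j0"
    then have "0 \<le> n + int k \<Longrightarrow> 0 < nat (n + int k) \<and> 0 < k" unfolding j0_def by (cases "0 \<le> n") auto
    then show "(if 0 \<le> n + int k then q k (nat (n + int k)) \<otimes>\<^bsub>R\<^esub> f [^]\<^bsub>R\<^esub> k else \<zero>\<^bsub>R\<^esub>) = \<zero>\<^bsub>R\<^esub>"
      using nq fR unfolding normal_def by auto
  qed (use q fR in auto)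
  also have "\<dots> = (if 0 \<le> n then q 0 (nat n) else q (nat (- n)) 0 \<otimes>\<^bsub>R\<^esub> f [^]\<^bsub>R\<^esub> nat (- n))"
    unfolding j0_def using q by auto
  finally show ?thesis .
qed

lemma fpow_nz: "f [^]\<^bsub>R\<^esub> (k::nat) \<noteq> \<zero>\<^bsub>R\<^esub>"
proof (induction k)
  case 0 then show ?case by simp
next
  case (Suc k) then show ?case using fR fnz R.integral[of "f [^]\<^bsub>R\<^esub> k" f] by auto
qed

lemma c_zero_imp_I: assumes p: "p \<in> carrier (UP (UP R))" and z: "\<And>n. c p n = \<zero>\<^bsub>R\<^esub>"
  shows "p \<in> I"
proof -
  obtain q where q: "q \<in> carrier (UP (UP R))" "normal q" "p \<ominus>\<^bsub>UP (UP R)\<^esub> q \<in> I"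
    using nf_exists[OF p] by blast
  have cq: "c q n = \<zero>\<^bsub>R\<^esub>" for n using c_eq_I[OF p q(1) q(3), of n] z by simp
  have "q j i = \<zero>\<^bsub>R\<^esub>" for j i
  proof (cases "j = 0")
    case True
    then show ?thesis using cq[of "int i"] c_normal[OF q(1,2), of "int i"] by simp
  next
    case False
    show ?thesis
    proof (cases "i = 0")
      case True
      have "q j 0 \<otimes>\<^bsub>R\<^esub> f [^]\<^bsub>R\<^esub> j = \<zero>\<^bsub>R\<^esub>"
        using cq[of "- int j"] c_normal[OF q(1,2), of "- int j"] False by simp
      then show ?thesis using True R.integral[of "q j 0" "f [^]\<^bsub>R\<^esub> j"] fpow_nz q(1) fR by auto
    next
      case False
      then show ?thesis using q(2) \<open>j \<noteq> 0\<close> unfolding normal_def by simp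
    qed
  qed
  then have "q = \<zero>\<^bsub>UP (UP R)\<^esub>" by (intro ext) simp
  then have "p \<ominus>\<^bsub>UP (UP R)\<^esub> q = p" using p by (simp add: a_minus_def)
  then show ?thesis using q(3) by simp
qed

lemma c_neg_div: assumes p: "p \<in> carrier (UP (UP R))" and n: "n < 0"
  shows "\<exists>r\<in>carrier R. c p n = r \<otimes>\<^bsub>R\<^esub> f [^]\<^bsub>R\<^esub> nat (- n)"
proof -
  obtain q where q: "q \<in> carrier (UP (UP R))" "normal q" "p \<ominus>\<^bsub>UP (UP R)\<^esub> q \<in> I"
    using nf_exists[OF p] by blast
  have "c p n = c q n" using c_eq_I[OF p q(1) q(3)] .
  then show ?thesis using c_normal[OF q(1,2), of n] n q(1) by auto
qed

lemma c_eq_imp: assumes x: "x \<in> carrier (UP (UP R))" and y: "y \<in> carrier (UP (UP R))"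
  and e: "\<And>n. c x n = c y n" shows "x \<ominus>\<^bsub>UP (UP R)\<^esub> y \<in> I"
proof (rule c_zero_imp_I)
  show "x \<ominus>\<^bsub>UP (UP R)\<^esub> y \<in> carrier (UP (UP R))" using x y by simp
  fix n show "c (x \<ominus>\<^bsub>UP (UP R)\<^esub> y) n = \<zero>\<^bsub>R\<^esub>"
    using c_minus[OF x y, of n] e[of n] wc_closed[OF y, of n] by simp
qed


lemma conv_single: assumes A: "A \<in> {- int K..int K}"
  and z: "\<And>m. m \<in> {- int K..int K} \<Longrightarrow> m \<noteq> A \<Longrightarrow> g m = \<zero>\<^bsub>R\<^esub> \<or> h (n - m) = \<zero>\<^bsub>R\<^esub>"
  and g: "\<And>m. g m \<in> carrier R" and h: "\<And>m. h m \<in> carrier R"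
  shows "convK R K g h n = g A \<otimes>\<^bsub>R\<^esub> h (n - A)"
  unfolding convK_def
proof (rule sum1[OF _ A])
  fix m assume "m \<in> {- int K..int K}" "m \<noteq> A"
  then show "g m \<otimes>\<^bsub>R\<^esub> h (n - m) = \<zero>\<^bsub>R\<^esub>" using z[of m] g[of m] h[of "n - m"] by auto
qed (auto simp: g h)

lemma homog: assumes a: "a \<in> carrier (UP (UP R))" and b: "b \<in> carrier (UP (UP R))"
  and nz: "c (a \<otimes>\<^bsub>UP (UP R)\<^esub> b) w \<noteq> \<zero>\<^bsub>R\<^esub>"
  and zo: "\<And>m. m \<noteq> w \<Longrightarrow> c (a \<otimes>\<^bsub>UP (UP R)\<^esub> b) m = \<zero>\<^bsub>R\<^esub>"
  shows "\<exists>A B. A + B = w \<and> (\<forall>m. m \<noteq> A \<longrightarrow> c a m = \<zero>\<^bsub>R\<^esub>) \<and> (\<forall>m. m \<noteq> B \<longrightarrow> c b m = \<zero>\<^bsub>R\<^esub>)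
     \<and> c a A \<otimes>\<^bsub>R\<^esub> c b B = c (a \<otimes>\<^bsub>UP (UP R)\<^esub> b) w"
proof -
  obtain K where K1: "\<forall>m. c a m \<noteq> \<zero>\<^bsub>R\<^esub> \<longrightarrow> - int K \<le> m \<and> m \<le> int K"
    and K2: "\<forall>n. c (a \<otimes>\<^bsub>UP (UP R)\<^esub> b) n = convK R K (c a) (c b) n"
    using c_conv[OF a b] by blast
  obtain K' where K'1: "\<forall>m. c b m \<noteq> \<zero>\<^bsub>R\<^esub> \<longrightarrow> - int K' \<le> m \<and> m \<le> int K'"
    using c_conv[OF b a] by blast
  define SA where "SA = {m. c a m \<noteq> \<zero>\<^bsub>R\<^esub>}"
  define SB where "SB = {m. c b m \<noteq> \<zero>\<^bsub>R\<^esub>}"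
  have fA: "finite SA" by (rule finite_subset[of _ "{- int K..int K}"]) (use K1 SA_def in auto)
  have fB: "finite SB" by (rule finite_subset[of _ "{- int K'..int K'}"]) (use K'1 SB_def in auto)
  have ca: "\<And>m. c a m \<in> carrier R" using a by simp
  have cb: "\<And>m. c b m \<in> carrier R" using b by simp
  have neA: "SA \<noteq> {}"
  proof
    assume "SA = {}"
    then have "c a = (\<lambda>m. \<zero>\<^bsub>R\<^esub>)" unfolding SA_def by auto
    then have "c (a \<otimes>\<^bsub>UP (UP R)\<^esub> b) w = \<zero>\<^bsub>R\<^esub>" using K2 conv_0l[OF cb] by simp
    then show False using nz by simp
  qed
  have neB: "SB \<noteq> {}"
  proof
    assume "SB = {}"
    then have "c b = (\<lambda>m. \<zero>\<^bsub>R\<^esub>)" unfolding SB_def by auto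
    then have "c (a \<otimes>\<^bsub>UP (UP R)\<^esub> b) w = \<zero>\<^bsub>R\<^esub>" using K2 conv_0r[OF ca] by simp
    then show False using nz by simp
  qed
  define A where "A = Max SA"
  define A' where "A' = Min SA"
  define B where "B = Max SB"
  define B' where "B' = Min SB"
  have AS: "A \<in> SA" "A' \<in> SA" unfolding A_def A'_def using fA neA by auto
  have BS: "B \<in> SB" "B' \<in> SB" unfolding B_def B'_def using fB neB by auto
  have Amax: "\<And>m. m \<in> SA \<Longrightarrow> A' \<le> m \<and> m \<le> A" unfolding A_def A'_def using fA by auto
  have Bmax: "\<And>m. m \<in> SB \<Longrightarrow> B' \<le> m \<and> m \<le> B" unfolding B_def B'_def using fB by auto
  have "convK R K (c a) (c b) (A + B) = c a A \<otimes>\<^bsub>R\<^esub> c b (A + B - A)"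
  proof (rule conv_single[OF _ _ ca cb])
    show "A \<in> {- int K..int K}" using AS K1 unfolding SA_def by auto
  next
    fix m assume "m \<in> {- int K..int K}" "m \<noteq> A"
    then have "m > A \<or> A + B - m > B" by auto
    then show "c a m = \<zero>\<^bsub>R\<^esub> \<or> c b (A + B - m) = \<zero>\<^bsub>R\<^esub>"
      using Amax[of m] Bmax[of "A + B - m"] unfolding SA_def SB_def by force
  qed
  then have top: "c (a \<otimes>\<^bsub>UP (UP R)\<^esub> b) (A + B) = c a A \<otimes>\<^bsub>R\<^esub> c b B" using K2 by simp
  have "convK R K (c a) (c b) (A' + B') = c a A' \<otimes>\<^bsub>R\<^esub> c b (A' + B' - A')"
  proof (rule conv_single[OF _ _ ca cb])
    show "A' \<in> {- int K..int K}" using AS K1 unfolding SA_def by auto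
  next
    fix m assume "m \<in> {- int K..int K}" "m \<noteq> A'"
    then have "m < A' \<or> A' + B' - m < B'" by auto
    then show "c a m = \<zero>\<^bsub>R\<^esub> \<or> c b (A' + B' - m) = \<zero>\<^bsub>R\<^esub>"
      using Amax[of m] Bmax[of "A' + B' - m"] unfolding SA_def SB_def by force
  qed
  then have bot: "c (a \<otimes>\<^bsub>UP (UP R)\<^esub> b) (A' + B') = c a A' \<otimes>\<^bsub>R\<^esub> c b B'" using K2 by simp
  have "c a A \<otimes>\<^bsub>R\<^esub> c b B \<noteq> \<zero>\<^bsub>R\<^esub>" using AS BS ca cb R.integral unfolding SA_def SB_def by blast
  then have w1: "A + B = w" using top zo by metis
  have "c a A' \<otimes>\<^bsub>R\<^esub> c b B' \<noteq> \<zero>\<^bsub>R\<^esub>" using AS BS ca cb R.integral unfolding SA_def SB_def by blast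
  then have w2: "A' + B' = w" using bot zo by metis
  have "A' \<le> A" "B' \<le> B" using Amax[OF AS(1)] Bmax[OF BS(1)] by auto
  then have eq: "A' = A" "B' = B" using w1 w2 by auto
  have "\<forall>m. m \<noteq> A \<longrightarrow> c a m = \<zero>\<^bsub>R\<^esub>" using Amax eq unfolding SA_def by force
  moreover have "\<forall>m. m \<noteq> B \<longrightarrow> c b m = \<zero>\<^bsub>R\<^esub>" using Bmax eq unfolding SB_def by force
  ultimately show ?thesis using w1 top by metis
qed


abbreviation S where "S \<equiv> S_ring R f"

lemma img_hom: "img R f \<in> ring_hom (UP (UP R)) S"
proof -
  have "img R f = (+>\<^bsub>UP (UP R)\<^esub>) I" by (intro ext) (simp add: img_def)
  then show ?thesis unfolding S_ring_def using I.rcos_ring_hom by simp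
qed

lemma S_cring: "cring S"
  unfolding S_ring_def by (rule I.quotient_is_cring[OF P2.UP_cring])

lemma img_closed: "x \<in> carrier (UP (UP R)) \<Longrightarrow> img R f x \<in> carrier S"
  by (rule ring_hom_closed[OF img_hom])

lemma img_mult: "x \<in> carrier (UP (UP R)) \<Longrightarrow> y \<in> carrier (UP (UP R)) \<Longrightarrow>
   img R f (x \<otimes>\<^bsub>UP (UP R)\<^esub> y) = img R f x \<otimes>\<^bsub>S\<^esub> img R f y"
  by (rule ring_hom_mult[OF img_hom])

lemma img_one: "img R f \<one>\<^bsub>UP (UP R)\<^esub> = \<one>\<^bsub>S\<^esub>"
  by (rule ring_hom_one[OF img_hom])

lemma img_zero: "img R f \<zero>\<^bsub>UP (UP R)\<^esub> = \<zero>\<^bsub>S\<^esub>"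
  by (rule ring_hom_zero[OF img_hom P2.UP_ring cring.axioms(1)[OF S_cring]])

lemma img_eq: assumes x: "x \<in> carrier (UP (UP R))" and y: "y \<in> carrier (UP (UP R))"
  shows "img R f x = img R f y \<longleftrightarrow> (\<forall>n. c x n = c y n)"
proof -
  have "img R f x = img R f y \<longleftrightarrow> x \<ominus>\<^bsub>UP (UP R)\<^esub> y \<in> I"
    unfolding img_def using P2.quotient_eq_iff_same_a_r_cos[OF I.is_ideal x y] by simp
  then show ?thesis using c_eq_I[OF x y] c_eq_imp[OF x y] by blast
qed

lemma carrier_S: assumes Y: "Y \<in> carrier S" shows "\<exists>a\<in>carrier (UP (UP R)). Y = img R f a"
  using Y unfolding S_ring_def FactRing_def A_RCOSETS_def' img_def by auto

lemma one_M: "\<one>\<^bsub>UP (UP R)\<^esub> = M \<one>\<^bsub>R\<^esub> 0 0"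
  unfolding M_def by simp

lemma c_one: "c \<one>\<^bsub>UP (UP R)\<^esub> n = (if n = 0 then \<one>\<^bsub>R\<^esub> else \<zero>\<^bsub>R\<^esub>)"
  unfolding one_M by (simp add: c_M)

lemma c_u: "c (var_u R) n = (if n = 1 then \<one>\<^bsub>R\<^esub> else \<zero>\<^bsub>R\<^esub>)"
  unfolding var_u_M by (simp add: c_M)

lemma c_v: "c (var_v R) n = (if n = - 1 then f else \<zero>\<^bsub>R\<^esub>)"
  unfolding var_v_M using fR by (simp add: c_M)

lemma u_closed: "var_u R \<in> carrier (UP (UP R))" unfolding var_u_M by simp
lemma v_closed: "var_v R \<in> carrier (UP (UP R))" unfolding var_v_M by simp

lemma unit_R: "x \<in> carrier R \<Longrightarrow> y \<in> carrier R \<Longrightarrow> x \<otimes>\<^bsub>R\<^esub> y = \<one>\<^bsub>R\<^esub> \<Longrightarrow> x \<in> Units R"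
proof -
  assume h: "x \<in> carrier R" "y \<in> carrier R" "x \<otimes>\<^bsub>R\<^esub> y = \<one>\<^bsub>R\<^esub>"
  then have "y \<otimes>\<^bsub>R\<^esub> x = \<one>\<^bsub>R\<^esub>" using R.m_comm by metis
  then show ?thesis unfolding Units_def using h by blast
qed

lemma fdiv: assumes r: "r \<in> carrier R" and s: "s \<in> carrier R" and k: "0 < k"
  and e: "r \<otimes>\<^bsub>R\<^esub> f [^]\<^bsub>R\<^esub> (k::nat) \<otimes>\<^bsub>R\<^esub> s = \<one>\<^bsub>R\<^esub>"
  shows False
proof -
  obtain k' where k': "k = Suc k'" using k by (cases k) auto
  have "f \<otimes>\<^bsub>R\<^esub> (r \<otimes>\<^bsub>R\<^esub> f [^]\<^bsub>R\<^esub> k' \<otimes>\<^bsub>R\<^esub> s) = r \<otimes>\<^bsub>R\<^esub> f [^]\<^bsub>R\<^esub> k \<otimes>\<^bsub>R\<^esub> s"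
    unfolding k' R.nat_pow_Suc using r s fR by (simp add: R.m_ac)
  then have "f \<in> Units R" using e r s fR by (intro unit_R[of f "r \<otimes>\<^bsub>R\<^esub> f [^]\<^bsub>R\<^esub> k' \<otimes>\<^bsub>R\<^esub> s"]) auto
  then show False using fnu by simp
qed

lemma unit_const: assumes a: "a \<in> carrier (UP (UP R))" and z: "\<And>m. m \<noteq> 0 \<Longrightarrow> c a m = \<zero>\<^bsub>R\<^esub>"
  and u: "c a 0 \<in> Units R"
  shows "img R f a \<in> Units S"
proof -
  define \<alpha> where "\<alpha> = c a 0"
  define \<beta> where "\<beta> = inv\<^bsub>R\<^esub> \<alpha>"
  have al: "\<alpha> \<in> carrier R" "\<beta> \<in> carrier R" "\<alpha> \<otimes>\<^bsub>R\<^esub> \<beta> = \<one>\<^bsub>R\<^esub>" "\<beta> \<otimes>\<^bsub>R\<^esub> \<alpha> = \<one>\<^bsub>R\<^esub>"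
    using u unfolding \<alpha>_def \<beta>_def by auto
  have e1: "img R f a = img R f (M \<alpha> 0 0)"
    unfolding img_eq[OF a M_closed[OF al(1)]] using z al(1) unfolding \<alpha>_def by (auto simp: c_M)
  have e2: "img R f (M \<alpha> 0 0) \<otimes>\<^bsub>S\<^esub> img R f (M \<beta> 0 0) = \<one>\<^bsub>S\<^esub>"
    using img_mult[of "M \<alpha> 0 0" "M \<beta> 0 0"] MM[OF al(1) al(2), of 0 0 0 0] al img_one one_M by simp
  have e3: "img R f (M \<beta> 0 0) \<otimes>\<^bsub>S\<^esub> img R f (M \<alpha> 0 0) = \<one>\<^bsub>S\<^esub>"
    using img_mult[of "M \<beta> 0 0" "M \<alpha> 0 0"] MM[OF al(2) al(1), of 0 0 0 0] al img_one one_M by simp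
  show ?thesis unfolding Units_def e1 using e2 e3 img_closed al by auto
qed


lemma neg_coef: assumes b: "b \<in> carrier (UP (UP R))" and B: "B < 0"
  and s: "s \<in> carrier R" and e: "s \<otimes>\<^bsub>R\<^esub> c b B = \<one>\<^bsub>R\<^esub>"
  shows False
proof -
  obtain r where r: "r \<in> carrier R" and cb: "c b B = r \<otimes>\<^bsub>R\<^esub> f [^]\<^bsub>R\<^esub> nat (- B)"
    using c_neg_div[OF b B] by blast
  have fp: "f [^]\<^bsub>R\<^esub> nat (- B) \<in> carrier R" using fR by simp
  have eq: "r \<otimes>\<^bsub>R\<^esub> f [^]\<^bsub>R\<^esub> nat (- B) \<otimes>\<^bsub>R\<^esub> s = \<one>\<^bsub>R\<^esub>"
    using e unfolding cb using R.m_comm[OF s R.m_closed[OF r fp]] by metis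
  have "0 < nat (- B)" using B by simp
  from fdiv[OF r s this eq] show False .
qed

lemma factor_data: assumes x: "x \<in> carrier (UP (UP R))" and a: "a \<in> carrier (UP (UP R))"
  and b: "b \<in> carrier (UP (UP R))"
  and e: "img R f x = img R f a \<otimes>\<^bsub>S\<^esub> img R f b"
  and cx: "\<And>n. c x n = (if n = w then \<gamma> else \<zero>\<^bsub>R\<^esub>)" and g: "\<gamma> \<noteq> \<zero>\<^bsub>R\<^esub>"
  shows "\<exists>A B. A + B = w \<and> (\<forall>m. m \<noteq> A \<longrightarrow> c a m = \<zero>\<^bsub>R\<^esub>) \<and> (\<forall>m. m \<noteq> B \<longrightarrow> c b m = \<zero>\<^bsub>R\<^esub>)
     \<and> c a A \<otimes>\<^bsub>R\<^esub> c b B = \<gamma>"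
proof -
  have ab: "a \<otimes>\<^bsub>UP (UP R)\<^esub> b \<in> carrier (UP (UP R))" using a b by simp
  have "img R f x = img R f (a \<otimes>\<^bsub>UP (UP R)\<^esub> b)" using e img_mult[OF a b] by simp
  then have ce: "\<And>n. c (a \<otimes>\<^bsub>UP (UP R)\<^esub> b) n = (if n = w then \<gamma> else \<zero>\<^bsub>R\<^esub>)"
    using img_eq[OF x ab] cx by simp
  show ?thesis using homog[OF a b, of w] ce g by simp
qed

lemma u_irr: "irreducible_elem S (img R f (var_u R))"
  unfolding irreducible_elem_def
proof (intro conjI ballI impI)
  show "img R f (var_u R) \<in> carrier S" using img_closed[OF u_closed] .
  show "img R f (var_u R) \<noteq> \<zero>\<^bsub>S\<^esub>"
  proof
    assume "img R f (var_u R) = \<zero>\<^bsub>S\<^esub>"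
    then have "img R f (var_u R) = img R f \<zero>\<^bsub>UP (UP R)\<^esub>" using img_zero by simp
    then have "c (var_u R) 1 = c \<zero>\<^bsub>UP (UP R)\<^esub> 1" using img_eq[OF u_closed P2.zero_closed] by blast
    then show False using c_u[of 1] by simp
  qed
  show "img R f (var_u R) \<notin> Units S"
  proof
    assume "img R f (var_u R) \<in> Units S"
    then obtain Y where Y: "Y \<in> carrier S" "img R f (var_u R) \<otimes>\<^bsub>S\<^esub> Y = \<one>\<^bsub>S\<^esub>"
      unfolding Units_def by blast
    obtain b where b: "b \<in> carrier (UP (UP R))" "Y = img R f b" using carrier_S[OF Y(1)] by blast
    have "img R f \<one>\<^bsub>UP (UP R)\<^esub> = img R f (var_u R) \<otimes>\<^bsub>S\<^esub> img R f b" using Y b img_one by simp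
    from factor_data[OF P2.one_closed u_closed b(1) this, of 0 "\<one>\<^bsub>R\<^esub>"]
    obtain A B where AB: "A + B = 0" "\<forall>m. m \<noteq> A \<longrightarrow> c (var_u R) m = \<zero>\<^bsub>R\<^esub>"
      "c (var_u R) A \<otimes>\<^bsub>R\<^esub> c b B = \<one>\<^bsub>R\<^esub>"
      using c_one by auto
    have "A = 1" using AB(2) c_u[of 1] by (metis R.one_not_zero)
    then have "B = -1" "\<one>\<^bsub>R\<^esub> \<otimes>\<^bsub>R\<^esub> c b B = \<one>\<^bsub>R\<^esub>" using AB c_u by auto
    then show False using neg_coef[OF b(1), of B "\<one>\<^bsub>R\<^esub>"] by simp
  qed
next
  fix r1 r2 assume r1: "r1 \<in> carrier S" and r2: "r2 \<in> carrier S"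
    and e: "img R f (var_u R) = r1 \<otimes>\<^bsub>S\<^esub> r2"
  obtain a where a: "a \<in> carrier (UP (UP R))" "r1 = img R f a" using carrier_S[OF r1] by blast
  obtain b where b: "b \<in> carrier (UP (UP R))" "r2 = img R f b" using carrier_S[OF r2] by blast
  from factor_data[OF u_closed a(1) b(1), of 1 "\<one>\<^bsub>R\<^esub>"] e a b c_u
  obtain A B where AB: "A + B = 1" "\<forall>m. m \<noteq> A \<longrightarrow> c a m = \<zero>\<^bsub>R\<^esub>" "\<forall>m. m \<noteq> B \<longrightarrow> c b m = \<zero>\<^bsub>R\<^esub>"
      "c a A \<otimes>\<^bsub>R\<^esub> c b B = \<one>\<^bsub>R\<^esub>" by auto
  have ca: "c a A \<in> carrier R" and cb: "c b B \<in> carrier R" using a b by auto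
  have "\<not> A < 0"
  proof
    assume "A < 0"
    then show False using neg_coef[OF a(1) _ cb, of A] AB(4) ca cb R.m_comm by metis
  qed
  moreover have "\<not> B < 0"
  proof
    assume "B < 0"
    then show False using neg_coef[OF b(1) _ ca, of B] AB(4) by simp
  qed
  ultimately have "A = 0 \<or> B = 0" using AB(1) by linarith
  then show "r1 \<in> Units S \<or> r2 \<in> Units S"
  proof
    assume "A = 0"
    then have "img R f a \<in> Units S" using unit_const[OF a(1)] AB unit_R[OF ca cb] by simp
    then show ?thesis using a by simp
  next
    assume "B = 0"
    then have "c b B \<otimes>\<^bsub>R\<^esub> c a A = \<one>\<^bsub>R\<^esub>" using AB(4) ca cb R.m_comm by metis
    then have "img R f b \<in> Units S" using unit_const[OF b(1)] AB unit_R[OF cb ca] \<open>B = 0\<close> by simp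
    then show ?thesis using b by simp
  qed
qed


lemma vcase: assumes a: "a \<in> carrier (UP (UP R))" and b: "b \<in> carrier (UP (UP R))"
  and A: "0 \<le> A" and AB: "A + B = -1" and za: "\<forall>m. m \<noteq> A \<longrightarrow> c a m = \<zero>\<^bsub>R\<^esub>"
  and e: "c a A \<otimes>\<^bsub>R\<^esub> c b B = f"
  shows "img R f a \<in> Units S"
proof -
  have B: "B < 0" using A AB by simp
  obtain r where r: "r \<in> carrier R" and cb: "c b B = r \<otimes>\<^bsub>R\<^esub> f [^]\<^bsub>R\<^esub> nat (- B)"
    using c_neg_div[OF b B] by blast
  define k where "k = nat A"
  have nk: "nat (- B) = Suc k" unfolding k_def using A AB by simp
  have ca: "c a A \<in> carrier R" using a by simp
  have fk: "f [^]\<^bsub>R\<^esub> k \<in> carrier R" using fR by simp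
  have "f \<otimes>\<^bsub>R\<^esub> (c a A \<otimes>\<^bsub>R\<^esub> r \<otimes>\<^bsub>R\<^esub> f [^]\<^bsub>R\<^esub> k) = c a A \<otimes>\<^bsub>R\<^esub> c b B"
    unfolding cb nk R.nat_pow_Suc using ca r fk fR by (simp add: R.m_ac)
  also have "\<dots> = f \<otimes>\<^bsub>R\<^esub> \<one>\<^bsub>R\<^esub>" using e fR by simp
  finally have "c a A \<otimes>\<^bsub>R\<^esub> r \<otimes>\<^bsub>R\<^esub> f [^]\<^bsub>R\<^esub> k = \<one>\<^bsub>R\<^esub>"
    using R.m_lcancel[OF fnz fR, of "c a A \<otimes>\<^bsub>R\<^esub> r \<otimes>\<^bsub>R\<^esub> f [^]\<^bsub>R\<^esub> k" "\<one>\<^bsub>R\<^esub>"] ca r fk by simp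
  then have e2: "(c a A \<otimes>\<^bsub>R\<^esub> r) \<otimes>\<^bsub>R\<^esub> f [^]\<^bsub>R\<^esub> k \<otimes>\<^bsub>R\<^esub> \<one>\<^bsub>R\<^esub> = \<one>\<^bsub>R\<^esub>" using ca r fk by simp
  have "\<not> 0 < k"
  proof
    assume "0 < k"
    from fdiv[OF R.m_closed[OF ca r] R.one_closed this e2] show False .
  qed
  then have k0: "k = 0" by simp
  then have A0: "A = 0" using A unfolding k_def by simp
  have "c a A \<otimes>\<^bsub>R\<^esub> r = \<one>\<^bsub>R\<^esub>" using e2 k0 ca r by simp
  then have "c a 0 \<in> Units R" using unit_R[OF ca r] A0 by simp
  then show ?thesis using unit_const[OF a] za A0 by simp
qed

lemma v_irr: "irreducible_elem S (img R f (var_v R))"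
  unfolding irreducible_elem_def
proof (intro conjI ballI impI)
  show "img R f (var_v R) \<in> carrier S" using img_closed[OF v_closed] .
  show "img R f (var_v R) \<noteq> \<zero>\<^bsub>S\<^esub>"
  proof
    assume "img R f (var_v R) = \<zero>\<^bsub>S\<^esub>"
    then have "img R f (var_v R) = img R f \<zero>\<^bsub>UP (UP R)\<^esub>" using img_zero by simp
    then have "c (var_v R) (-1) = c \<zero>\<^bsub>UP (UP R)\<^esub> (-1)" using img_eq[OF v_closed P2.zero_closed] by blast
    then show False using c_v[of "-1"] fnz by simp
  qed
  show "img R f (var_v R) \<notin> Units S"
  proof
    assume "img R f (var_v R) \<in> Units S"
    then obtain Y where Y: "Y \<in> carrier S" "img R f (var_v R) \<otimes>\<^bsub>S\<^esub> Y = \<one>\<^bsub>S\<^esub>"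
      unfolding Units_def by blast
    obtain b where b: "b \<in> carrier (UP (UP R))" "Y = img R f b" using carrier_S[OF Y(1)] by blast
    have "img R f \<one>\<^bsub>UP (UP R)\<^esub> = img R f (var_v R) \<otimes>\<^bsub>S\<^esub> img R f b" using Y b img_one by simp
    from factor_data[OF P2.one_closed v_closed b(1) this, of 0 "\<one>\<^bsub>R\<^esub>"]
    obtain A B where AB: "A + B = 0" "\<forall>m. m \<noteq> A \<longrightarrow> c (var_v R) m = \<zero>\<^bsub>R\<^esub>"
      "c (var_v R) A \<otimes>\<^bsub>R\<^esub> c b B = \<one>\<^bsub>R\<^esub>"
      using c_one by auto
    have "A = -1" using AB(2) c_v[of "-1"] fnz by metis
    then have "f \<otimes>\<^bsub>R\<^esub> c b B = \<one>\<^bsub>R\<^esub>" using AB c_v by auto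
    then have "f \<in> Units R" using unit_R[OF fR wc_closed[OF b(1)]] by simp
    then show False using fnu by simp
  qed
next
  fix r1 r2 assume r1: "r1 \<in> carrier S" and r2: "r2 \<in> carrier S"
    and e: "img R f (var_v R) = r1 \<otimes>\<^bsub>S\<^esub> r2"
  obtain a where a: "a \<in> carrier (UP (UP R))" "r1 = img R f a" using carrier_S[OF r1] by blast
  obtain b where b: "b \<in> carrier (UP (UP R))" "r2 = img R f b" using carrier_S[OF r2] by blast
  from factor_data[OF v_closed a(1) b(1), of "-1" f] e a b c_v fnz
  obtain A B where AB: "A + B = -1" "\<forall>m. m \<noteq> A \<longrightarrow> c a m = \<zero>\<^bsub>R\<^esub>" "\<forall>m. m \<noteq> B \<longrightarrow> c b m = \<zero>\<^bsub>R\<^esub>"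
      "c a A \<otimes>\<^bsub>R\<^esub> c b B = f" by auto
  have ca: "c a A \<in> carrier R" and cb: "c b B \<in> carrier R" using a b by auto
  have "0 \<le> A \<or> 0 \<le> B" using AB(1) by linarith
  then show "r1 \<in> Units S \<or> r2 \<in> Units S"
  proof
    assume "0 \<le> A"
    then have "img R f a \<in> Units S" using vcase[OF a(1) b(1) _ AB(1) AB(2) AB(4)] by simp
    then show ?thesis using a by simp
  next
    assume B: "0 \<le> B"
    have "c b B \<otimes>\<^bsub>R\<^esub> c a A = f" using AB(4) ca cb R.m_comm by metis
    moreover have "B + A = -1" using AB(1) by simp
    ultimately have "img R f b \<in> Units S" using vcase[OF b(1) a(1) B _ AB(3)] by simp
    then show ?thesis using b by simp
  qed
qed

end

theorem lemma1p3:
  fixes R :: "('a, 'm) ring_scheme" and f :: 'a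
  assumes "domain R"
    and "f \<in> carrier R" and "f \<noteq> \<zero>\<^bsub>R\<^esub>" and "f \<notin> Units R"
  shows "irreducible_elem (S_ring R f) (img R f (var_u R)) \<and>
         irreducible_elem (S_ring R f) (img R f (var_v R))"
proof -
  interpret uvs R f by (rule uvs.intro[OF assms])
  show ?thesis using u_irr v_irr by simp
qed

end
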